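(* Let $H$ be a monoid and let $A\subseteq H\setminus\{1_H\}$ be a non-empty finite set such that $a\nmid_H b$ for all $a,b\in A$ with $a\neq b$. Then the set $\{1_H\}\cup A$ is irreducible in $\mathcal{P}_{\mathrm{fin},1}(H)$.
   Context: For a monoid $H$, $x\mid_H y$ means $y\in HxH=\{uxv:u,v\in H\}$. $\mathcal{P}_{\mathrm{fin},1}(H)$ denotes the set of all non-empty finite subsets of $H$ containing $1_H$, a monoid under $XY=\{xy:x\in X,y\in Y\}$. In a monoid $M$: $x\mid_M y$ iff $y\in MxM$; $x,y$ are associated if each divides the other; $x$ properly divides $y$ if $x\mid_M y$ and $y\nmid_M x$. A unit-divisor is an element dividing $1_M$; other elements are non-unit-divisors. An irreducible of $M$ is a non-unit-divisor $a$ such that $a\neq xy$ for all non-unit-divisors $x,y$ properly dividing $a$. *)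

theory Defs
  imports Main
begin

definition hdvd :: "'a::monoid_mult \<Rightarrow> 'a \<Rightarrow> bool" where
  "hdvd x y \<longleftrightarrow> (\<exists>u v. y = u * x * v)"

definition set_mult :: "'a::monoid_mult set \<Rightarrow> 'a set \<Rightarrow> 'a set" where
  "set_mult X Y = {x * y | x y. x \<in> X \<and> y \<in> Y}"

definition Pfin1 :: "'a::monoid_mult set set" where
  "Pfin1 = {X. X \<noteq> {} \<and> finite X \<and> 1 \<in> X}"

definition pdvd :: "'a::monoid_mult set \<Rightarrow> 'a set \<Rightarrow> bool" where
  "pdvd X Y \<longleftrightarrow> (\<exists>U\<in>Pfin1. \<exists>V\<in>Pfin1. Y = set_mult (set_mult U X) V)"

definition pproper_dvd :: "'a::monoid_mult set \<Rightarrow> 'a set \<Rightarrow> bool" where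
  "pproper_dvd X Y \<longleftrightarrow> pdvd X Y \<and> \<not> pdvd Y X"

definition punit_divisor :: "'a::monoid_mult set \<Rightarrow> bool" where
  "punit_divisor X \<longleftrightarrow> pdvd X {1}"

definition pirreducible :: "'a::monoid_mult set \<Rightarrow> bool" where
  "pirreducible A \<longleftrightarrow> A \<in> Pfin1 \<and> \<not> punit_divisor A \<and>
     (\<forall>X\<in>Pfin1. \<forall>Y\<in>Pfin1.
        \<not> punit_divisor X \<and> \<not> punit_divisor Y \<and> pproper_dvd X A \<and> pproper_dvd Y A
        \<longrightarrow> A \<noteq> set_mult X Y)"

end

theory Submission
  imports Defs
begin

lemma key:
  fixes A :: "'a::monoid_mult set"
  assumes anti: "\<forall>a\<in>A. \<forall>b\<in>A. a \<noteq> b \<longrightarrow> \<not> hdvd a b"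
    and x: "x \<in> A" and y: "y \<in> A" and xy: "x * y \<in> insert 1 A"
  shows "x = y"
proof (rule ccontr)
  assume ne: "x \<noteq> y"
  show False
  proof (cases "x * y = 1")
    case True
    have "y = y * x * y" by (metis True mult.assoc mult_1_right)
    then have "hdvd x y" unfolding hdvd_def by blast
    then show False using anti x y ne by blast
  next
    case False
    then have m: "x * y \<in> A" using xy by auto
    have "hdvd x (x*y)" unfolding hdvd_def by (metis mult_1_left)
    then have 1: "x = x * y" using anti x m by blast
    have "hdvd y (x*y)" unfolding hdvd_def by (metis mult_1_right)
    then have 2: "y = x * y" using anti y m by blast
    show False using 1 2 ne by simp
  qed
qed

lemma sm_one_left: "set_mult {1} X = X"
  unfolding set_mult_def by auto

lemma sm_one_right: "set_mult X {1} = X"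
  unfolding set_mult_def by auto

theorem proposition2p4:
  fixes A :: "'a::monoid_mult set"
  assumes "finite A" and "A \<noteq> {}" and "1 \<notin> A"
    and "\<forall>a\<in>A. \<forall>b\<in>A. a \<noteq> b \<longrightarrow> \<not> hdvd a b"
  shows "pirreducible (insert 1 A)"
proof -
  let ?B = "insert 1 A"
  have one: "{1::'a} \<in> Pfin1" unfolding Pfin1_def by auto
  have BP: "?B \<in> Pfin1" unfolding Pfin1_def using assms(1) by auto
  have nu: "\<not> punit_divisor ?B"
  proof
    assume "punit_divisor ?B"
    then obtain U V where U: "U \<in> Pfin1" and V: "V \<in> Pfin1"
      and e: "{1} = set_mult (set_mult U ?B) V"
      unfolding punit_divisor_def pdvd_def by blast
    have "1 \<in> U" "1 \<in> V" using U V unfolding Pfin1_def by auto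
    obtain a where "a \<in> A" using assms(2) by blast
    then have "a \<in> set_mult (set_mult U ?B) V"
      unfolding set_mult_def using \<open>1 \<in> U\<close> \<open>1 \<in> V\<close>
      by (smt (verit, best) insertCI mem_Collect_eq mult_1_left mult_1_right)
    then show False using e \<open>a \<in> A\<close> assms(3) by (metis singletonD)
  qed
  have main: False if X: "X \<in> Pfin1" and Y: "Y \<in> Pfin1"
      and nX: "\<not> punit_divisor X" and nY: "\<not> punit_divisor Y"
      and pX: "pproper_dvd X ?B" and e: "?B = set_mult X Y" for X Y
  proof -
    have X1: "1 \<in> X" and Y1: "1 \<in> Y" using X Y unfolding Pfin1_def by auto
    have XB: "X \<subseteq> ?B"
    proof
      fix x assume "x \<in> X"
      then have "x * 1 \<in> set_mult X Y" unfolding set_mult_def using Y1 by blast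
      then show "x \<in> ?B" using e by simp
    qed
    have YB: "Y \<subseteq> ?B"
    proof
      fix y assume "y \<in> Y"
      then have "1 * y \<in> set_mult X Y" unfolding set_mult_def using X1 by blast
      then show "y \<in> ?B" using e by simp
    qed
    have "X \<noteq> {1}" using nX unfolding punit_divisor_def pdvd_def
      using one sm_one_left by metis
    then obtain a where a: "a \<in> X" "a \<noteq> 1" using X1 by blast
    have "Y \<noteq> {1}" using nY unfolding punit_divisor_def pdvd_def
      using one sm_one_left by metis
    then obtain b where b: "b \<in> Y" "b \<noteq> 1" using Y1 by blast
    have eq: "x = y" if "x \<in> X" "x \<noteq> 1" "y \<in> Y" "y \<noteq> 1" for x y
    proof -
      have "x \<in> A" "y \<in> A" using that XB YB by auto
      moreover have "x * y \<in> ?B" using e that unfolding set_mult_def by blast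
      ultimately show ?thesis using key[OF assms(4)] by blast
    qed
    have Xa: "X = {1, a}" using eq a b X1 by blast
    have Ya: "Y = {1, a}" using eq a b Y1 by (metis Xa insertI1 insert_commute insert_absorb2 subset_antisym subsetI insertE singletonD)
    have aA: "a \<in> A" using a XB by auto
    have aa: "a * a \<in> ?B" using e Xa Ya unfolding set_mult_def by blast
    have aa2: "a * a \<in> X"
    proof (cases "a * a = 1")
      case True then show ?thesis using X1 by simp
    next
      case False
      then have "a * a \<in> A" using aa by simp
      moreover have "hdvd a (a*a)" unfolding hdvd_def by (metis mult_1_left)
      ultimately have "a = a * a" using assms(4) aA by blast
      then show ?thesis using a by simp
    qed
    have "?B \<subseteq> X"
    proof
      fix z assume "z \<in> ?B"
      then obtain x y where z: "z = x * y" "x \<in> X" "y \<in> Y" using e unfolding set_mult_def by blast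
      then show "z \<in> X" using Xa Ya aa2 by auto
    qed
    then have "X = ?B" using XB by blast
    then have "pdvd ?B X" unfolding pdvd_def using one sm_one_left sm_one_right by metis
    then show False using pX unfolding pproper_dvd_def by blast
  qed
  show ?thesis unfolding pirreducible_def using BP nu main by blast
qed

end
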